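(* Suppose Assumptions (A1)–(A3) hold, $F$ is bounded below by $F_{\inf}$ (i.e. $F(\Theta)\ge F_{\inf}$ for all $\Theta$), and for every round $r$ and block $k\in\{0,\dots,K\}$ the step size satisfies $$\eta_k^r\le \frac{1}{16\,\tau_k^r\,\max\{L,L_k\}\,\max_{0\le t\le\tau_k^r-1}w_k^{r,t}}.$$ Let $W_k^r=\sum_{t=0}^{\tau_k^r-1}w_k^{r,t}$ and, for $R\ge1$, $S=\sum_{r=0}^{R-1}\sum_{k=0}^K\eta_k^rW_k^r$. Then the iterates of the algorithm run for $R$ rounds satisfy $$\frac1S\sum_{r=0}^{R-1}\sum_{k=0}^K\eta_k^rW_k^r\,\mathbb{E}\big[\|\nabla_kF(\Theta^{r,0})\|^2\big]\le \frac4S\big(F(\Theta^{0,0})-F_{\inf}\big)+\frac{4L}{S}\sum_{r=0}^{R-1}\sum_{k=0}^K(\eta_k^r)^2\,W_k^r\,\Big(\max_{0\le t\le\tau_k^r-1}w_k^{r,t}\Big)\,\tau_k^r\,\sigma_k^2,$$ where $\mathbb{E}$ is the total expectation over the mini-batches $\mathcal{B}^0,\dots,\mathcal{B}^{R-1}$.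
   Context: Setting. There are blocks $k=0,1,\dots,K$ (block $0$ is the server, blocks $1,\dots,K$ are parties). The global parameter is $\Theta=(\theta_0,\theta_1,\dots,\theta_K)\in\mathbb{R}^V$ with $\theta_k\in\mathbb{R}^{V_k}$, $V=\sum_k V_k$. There are $N$ data samples; for each $i\in\{1,\dots,N\}$ there is a differentiable loss $l_i:\mathbb{R}^V\to\mathbb{R}$. The objective is $F(\Theta)=\frac1N\sum_{i=1}^N l_i(\Theta)$, and $\nabla_kF$ denotes the partial gradient of $F$ with respect to the block $\theta_k$. For a mini-batch $\mathcal{B}\subseteq\{1,\dots,N\}$, the stochastic partial gradient is $g_k(\Theta;\mathcal{B})=\frac{1}{|\mathcal{B}|}\sum_{i\in\mathcal{B}}\nabla_{\theta_k}l_i(\Theta)$. Assumptions. (A1) Smoothness: there are constants $L<\infty$ and $L_k<\infty$ ($k=0,\dots,K$) such that for all $i$ and all $\Theta_1,\Theta_2\in\mathbb{R}^V$: $\|\nabla_\Theta l_i(\Theta_1)-\nabla_\Theta l_i(\Theta_2)\|\le L\|\Theta_1-\Theta_2\|$ and $\|\nabla_{\theta_k} l_i(\Theta_1)-\nabla_{\theta_k} l_i(\Theta_2)\|\le L_k\|\Theta_1-\Theta_2\|$. (A2) Unbiasedness: for a random mini-batch $\mathcal{B}$ (drawn as in the algorithm) and every fixed $\Theta$, $\mathbb{E}_{\mathcal{B}}[g_k(\Theta;\mathcal{B})]=\nabla_kF(\Theta)$ for all $k$. (A3) Bounded variance: there are constants $\sigma_k<\infty$ such that for every fixed $\Theta$,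 $\mathbb{E}_{\mathcal{B}}\|\nabla_kF(\Theta)-g_k(\Theta;\mathcal{B})\|^2\le\sigma_k^2$. Algorithm (Flex-VFL). Given deterministic positive integers $\tau_k^r\ge1$ (number of local iterations of block $k$ in round $r$), step sizes $\eta_k^r>0$, and weights $w_k^{r,t}\ge 1$, and an initial $\Theta^{0,0}$. In each round $r=0,1,\dots$, a mini-batch $\mathcal{B}^r$ is drawn at random, independently of $\mathcal{B}^0,\dots,\mathcal{B}^{r-1}$ (so that (A2), (A3) hold for $\mathcal{B}^r$ conditionally on the past). Write $\Theta^{r,0}=(\theta_0^{r,0},\dots,\theta_K^{r,0})$. For each block $k$ and $t=0,\dots,\tau_k^r-1$: let $\Gamma_k^{r,t}\in\mathbb{R}^V$ be the vector whose block $k$ equals $\theta_k^{r,t}$ and whose block $j\neq k$ equals $\theta_j^{r,0}$; set $g_k^{r,t}=g_k(\Gamma_k^{r,t};\mathcal{B}^r)$ and $\theta_k^{r,t+1}=\theta_k^{r,t}-\eta_k^r\,w_k^{r,t}\,g_k^{r,t}$. Then $\Theta^{r+1,0}=(\theta_0^{r,\tau_0^r},\dots,\theta_K^{r,\tau_K^r})$. In particular $\theta_k^{r,\tau_k^r}=\theta_k^{r,0}-\eta_k^r\sum_{t=0}^{\tau_k^r-1}w_k^{r,t}g_k^{r,t}$. *)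

theory Defs
  imports "HOL-Probability.Probability"
begin

text \<open>Blocks of coordinates: the parameter space is an abstract Euclidean space 'p,
whose orthonormal basis is partitioned into the blocks Bk 0, ..., Bk K.
blk Bk k x is the block-k component of x (orthogonal projection onto span (Bk k)).\<close>

definition blk :: "(nat \<Rightarrow> 'p::euclidean_space set) \<Rightarrow> nat \<Rightarrow> 'p \<Rightarrow> 'p" where
  "blk Bk k x = (\<Sum>b\<in>Bk k. (x \<bullet> b) *\<^sub>R b)"

text \<open>Stochastic partial gradient g_k(x;B) (embedded in the block-k coordinates);
gl i x is the full gradient of the loss l_i at x.\<close>

definition sgrad :: "(nat \<Rightarrow> 'p::euclidean_space set) \<Rightarrow> (nat \<Rightarrow> 'p \<Rightarrow> 'p) \<Rightarrow> nat \<Rightarrow> 'p \<Rightarrow> nat set \<Rightarrow> 'p" where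
  "sgrad Bk gl k x B = (1 / real (card B)) *\<^sub>R (\<Sum>i\<in>B. blk Bk k (gl i x))"

text \<open>Local iterates of block k within one round: local_iter ... t is Gamma_k^{r,t}
(block k = theta_k^{r,t}, the other blocks stay at Theta^{r,0}).\<close>

fun local_iter :: "(nat \<Rightarrow> 'p::euclidean_space set) \<Rightarrow> (nat \<Rightarrow> 'p \<Rightarrow> 'p) \<Rightarrow> real \<Rightarrow> (nat \<Rightarrow> real)
    \<Rightarrow> nat \<Rightarrow> nat set \<Rightarrow> 'p \<Rightarrow> nat \<Rightarrow> 'p" where
  "local_iter Bk gl eta w k B x 0 = x"
| "local_iter Bk gl eta w k B x (Suc t) =
     local_iter Bk gl eta w k B x t
       - (eta * w t) *\<^sub>R sgrad Bk gl k (local_iter Bk gl eta w k B x t) B"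

text \<open>One round of Flex-VFL with mini-batch B, starting from x = Theta^{r,0}.
Indices: eta k r, tau k r, w k r t.\<close>

definition flex_round :: "nat \<Rightarrow> (nat \<Rightarrow> 'p::euclidean_space set) \<Rightarrow> (nat \<Rightarrow> 'p \<Rightarrow> 'p)
    \<Rightarrow> (nat \<Rightarrow> nat \<Rightarrow> real) \<Rightarrow> (nat \<Rightarrow> nat \<Rightarrow> nat \<Rightarrow> real) \<Rightarrow> (nat \<Rightarrow> nat \<Rightarrow> nat)
    \<Rightarrow> nat \<Rightarrow> nat set \<Rightarrow> 'p \<Rightarrow> 'p" where
  "flex_round K Bk gl eta w tau r B x =
     (\<Sum>k\<le>K. blk Bk k (local_iter Bk gl (eta k r) (w k r) k B x (tau k r)))"

text \<open>Theta^{r,0} as a function of the mini-batch sequence bs (bs r = B^r).\<close>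

fun flex_iter :: "nat \<Rightarrow> (nat \<Rightarrow> 'p::euclidean_space set) \<Rightarrow> (nat \<Rightarrow> 'p \<Rightarrow> 'p)
    \<Rightarrow> (nat \<Rightarrow> nat \<Rightarrow> real) \<Rightarrow> (nat \<Rightarrow> nat \<Rightarrow> nat \<Rightarrow> real) \<Rightarrow> (nat \<Rightarrow> nat \<Rightarrow> nat)
    \<Rightarrow> 'p \<Rightarrow> (nat \<Rightarrow> nat set) \<Rightarrow> nat \<Rightarrow> 'p" where
  "flex_iter K Bk gl eta w tau x0 bs 0 = x0"
| "flex_iter K Bk gl eta w tau x0 bs (Suc r) =
     flex_round K Bk gl eta w tau r (bs r) (flex_iter K Bk gl eta w tau x0 bs r)"

end

theory Submission
  imports Defs
begin

lemma blk_linear: "linear (blk Bk k)"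
  unfolding blk_def
  by (rule linearI) (simp_all add: inner_add_left scaleR_add_left sum.distrib scaleR_sum_right)

lemma blk_diff: "blk Bk k (x - y) = blk Bk k x - blk Bk k y"
  using linear_diff[OF blk_linear] by blast

lemma blk_sum: "blk Bk k (\<Sum>i\<in>A. f i) = (\<Sum>i\<in>A. blk Bk k (f i))"
  using linear_sum[OF blk_linear] by blast

lemma blk_scaleR: "blk Bk k (c *\<^sub>R x) = c *\<^sub>R blk Bk k x"
  using linear_scale[OF blk_linear] by blast

lemma blk_inner_Basis:
  assumes "Bk k \<subseteq> Basis" "b \<in> Basis"
  shows "blk Bk k y \<bullet> b = (if b \<in> Bk k then y \<bullet> b else 0)"
proof -
  have fin: "finite (Bk k)" using assms finite_subset finite_Basis by blast
  have "blk Bk k y \<bullet> b = (\<Sum>b'\<in>Bk k. (y \<bullet> b') * (b' \<bullet> b))"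
    unfolding blk_def by (simp add: inner_sum_left)
  also have "\<dots> = (\<Sum>b'\<in>Bk k. if b' = b then y \<bullet> b else 0)"
    using assms by (intro sum.cong) (auto simp: inner_Basis)
  also have "\<dots> = (if b \<in> Bk k then y \<bullet> b else 0)"
    using fin by (simp add: sum.delta')
  finally show ?thesis .
qed

lemma blk_inner_formula:
  assumes "Bk k \<subseteq> Basis"
  shows "blk Bk k x \<bullet> y = (\<Sum>b\<in>Bk k. (x \<bullet> b) * (y \<bullet> b))"
proof -
  have "blk Bk k x \<bullet> y = (\<Sum>b\<in>Basis. (blk Bk k x \<bullet> b) * (y \<bullet> b))"
    by (rule euclidean_inner)
  also have "\<dots> = (\<Sum>b\<in>Basis. if b \<in> Bk k then (x \<bullet> b) * (y \<bullet> b) else 0)"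
    using assms by (intro sum.cong) (auto simp: blk_inner_Basis)
  also have "\<dots> = (\<Sum>b\<in>Bk k. (x \<bullet> b) * (y \<bullet> b))"
    using assms by (simp add: sum.inter_restrict[symmetric] Int_absorb1 Int_commute)
  finally show ?thesis .
qed

lemma blk_inner_blk:
  assumes "Bk k \<subseteq> Basis"
  shows "blk Bk k x \<bullet> blk Bk k y = blk Bk k x \<bullet> y"
proof -
  have "blk Bk k x \<bullet> blk Bk k y = (\<Sum>b\<in>Bk k. (x \<bullet> b) * (blk Bk k y \<bullet> b))"
    using assms by (rule blk_inner_formula)
  also have "\<dots> = (\<Sum>b\<in>Bk k. (x \<bullet> b) * (y \<bullet> b))"
    using assms by (intro sum.cong refl) (simp add: blk_inner_Basis[of Bk k, OF assms] subsetD[OF assms])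
  also have "\<dots> = blk Bk k x \<bullet> y" using assms by (simp add: blk_inner_formula)
  finally show ?thesis .
qed

lemma norm_blk_le:
  assumes "Bk k \<subseteq> Basis"
  shows "norm (blk Bk k x) \<le> norm x"
proof -
  have "(norm (blk Bk k x))\<^sup>2 = (\<Sum>b\<in>Bk k. (x \<bullet> b) * (x \<bullet> b))"
    using blk_inner_blk[of Bk k, OF assms, of x x] blk_inner_formula[of Bk k, OF assms, of x x]
    by (simp add: power2_norm_eq_inner)
  also have "\<dots> \<le> (\<Sum>b\<in>Basis. (x \<bullet> b) * (x \<bullet> b))"
    using assms by (intro sum_mono2) auto
  also have "\<dots> = (norm x)\<^sup>2"
    by (simp add: power2_norm_eq_inner euclidean_inner[of x x])
  finally show ?thesis using power2_le_imp_le by fastforce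
qed

lemma Bk_sub:
  assumes "(\<Union>k\<le>K. Bk k) = (Basis::'p::euclidean_space set)" "k \<le> K"
  shows "Bk k \<subseteq> Basis"
  using assms by blast

lemma blk_decomp_inner:
  fixes Bk :: "nat \<Rightarrow> 'p::euclidean_space set"
  assumes disj: "\<forall>k\<le>K. \<forall>j\<le>K. k \<noteq> j \<longrightarrow> Bk k \<inter> Bk j = {}"
    and cover: "(\<Union>k\<le>K. Bk k) = Basis"
  shows "x \<bullet> y = (\<Sum>k\<le>K. blk Bk k x \<bullet> y)"
proof -
  have "(\<Sum>k\<le>K. blk Bk k x \<bullet> y) = (\<Sum>k\<le>K. \<Sum>b\<in>Bk k. (x \<bullet> b) * (y \<bullet> b))"
    using cover by (intro sum.cong refl blk_inner_formula) blast
  also have "\<dots> = (\<Sum>b\<in>(\<Union>k\<le>K. Bk k). (x \<bullet> b) * (y \<bullet> b))"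
  proof (intro sum.UNION_disjoint[symmetric])
    show "\<forall>i\<in>{..K}. finite (Bk i)"
      using cover by (metis UN_upper finite_Basis finite_subset)
  qed (use disj in auto)
  also have "\<dots> = x \<bullet> y" using cover by (simp add: euclidean_inner[of x y])
  finally show ?thesis by simp
qed

lemma blk_decomp:
  fixes Bk :: "nat \<Rightarrow> 'p::euclidean_space set"
  assumes disj: "\<forall>k\<le>K. \<forall>j\<le>K. k \<noteq> j \<longrightarrow> Bk k \<inter> Bk j = {}"
    and cover: "(\<Union>k\<le>K. Bk k) = Basis"
  shows "x = (\<Sum>k\<le>K. blk Bk k x)"
proof (rule euclidean_eqI)
  fix b :: 'p assume "b \<in> Basis"
  show "x \<bullet> b = (\<Sum>k\<le>K. blk Bk k x) \<bullet> b"
    using blk_decomp_inner[OF disj cover, of x b] by (simp add: inner_sum_left)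
qed

lemma blk_blk:
  fixes Bk :: "nat \<Rightarrow> 'p::euclidean_space set"
  assumes disj: "\<forall>k\<le>K. \<forall>j\<le>K. k \<noteq> j \<longrightarrow> Bk k \<inter> Bk j = {}"
    and cover: "(\<Union>k\<le>K. Bk k) = Basis" and jk: "j \<le> K" "k \<le> K"
  shows "blk Bk j (blk Bk k x) = (if j = k then blk Bk k x else 0)"
proof (rule euclidean_eqI)
  fix b :: 'p assume b: "b \<in> Basis"
  have sj: "Bk j \<subseteq> Basis" and sk: "Bk k \<subseteq> Basis" using cover jk by blast+
  show "blk Bk j (blk Bk k x) \<bullet> b = (if j = k then blk Bk k x else 0) \<bullet> b"
    using blk_inner_Basis[of Bk j, OF sj b, of "blk Bk k x"] blk_inner_Basis[of Bk k, OF sk b, of x]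
      disj jk by auto
qed

lemma blk_sum_blk:
  fixes Bk :: "nat \<Rightarrow> 'p::euclidean_space set"
  assumes disj: "\<forall>k\<le>K. \<forall>j\<le>K. k \<noteq> j \<longrightarrow> Bk k \<inter> Bk j = {}"
    and cover: "(\<Union>k\<le>K. Bk k) = Basis" and k: "k \<le> K"
  shows "blk Bk k (\<Sum>j\<le>K. blk Bk j (a j)) = blk Bk k (a k)"
proof -
  have "blk Bk k (\<Sum>j\<le>K. blk Bk j (a j)) = (\<Sum>j\<le>K. blk Bk k (blk Bk j (a j)))"
    by (rule blk_sum)
  also have "\<dots> = (\<Sum>j\<le>K. if k = j then blk Bk j (a j) else 0)"
    using k by (intro sum.cong refl) (simp add: blk_blk[OF disj cover])
  also have "\<dots> = blk Bk k (a k)" using k by simp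
  finally show ?thesis .
qed

lemma descent:
  fixes f :: "'a::real_inner \<Rightarrow> real"
  assumes der: "\<And>x. (f has_derivative (\<lambda>h. g x \<bullet> h)) (at x)"
    and lip: "\<And>x y. norm (g x - g y) \<le> L * norm (x - y)"
  shows "f y \<le> f x + g x \<bullet> (y - x) + L / 2 * (norm (y - x))\<^sup>2"
proof -
  define h where "h = y - x"
  define \<phi> where "\<phi> t = f (x + t *\<^sub>R h) - t * (g x \<bullet> h) - L / 2 * t\<^sup>2 * (norm h)\<^sup>2" for t
  have D: "(\<phi> has_real_derivative (g (x + t *\<^sub>R h) \<bullet> h - g x \<bullet> h - L * t * (norm h)\<^sup>2)) (at t)" for t
  proof -
    have "((\<lambda>t. x + t *\<^sub>R h) has_derivative (\<lambda>s. s *\<^sub>R h)) (at t)"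
      by (auto intro!: derivative_eq_intros)
    from has_derivative_compose[OF this der]
    have "((\<lambda>t. f (x + t *\<^sub>R h)) has_real_derivative (g (x + t *\<^sub>R h) \<bullet> h)) (at t)"
      unfolding has_field_derivative_def
      by (rule has_derivative_eq_rhs) (auto simp: inner_scaleR_right mult.commute)
    then show ?thesis unfolding \<phi>_def
      by (auto intro!: derivative_eq_intros simp: power2_eq_square algebra_simps)
  qed
  have "\<phi> 1 \<le> \<phi> 0"
  proof (rule DERIV_nonpos_imp_nonincreasing[of 0 1 \<phi>])
    fix t :: real assume t: "0 \<le> t" "t \<le> 1"
    have "g (x + t *\<^sub>R h) \<bullet> h - g x \<bullet> h = (g (x + t *\<^sub>R h) - g x) \<bullet> h"
      by (simp add: inner_diff_left)
    also have "\<dots> \<le> norm (g (x + t *\<^sub>R h) - g x) * norm h" by (rule norm_cauchy_schwarz)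
    also have "\<dots> \<le> (L * norm (t *\<^sub>R h)) * norm h"
      using lip[of "x + t *\<^sub>R h" x] by (intro mult_right_mono) auto
    also have "\<dots> = L * t * (norm h)\<^sup>2" using t by (simp add: power2_eq_square)
    finally show "\<exists>y. (\<phi> has_real_derivative y) (at t) \<and> y \<le> 0"
      using D[of t] by (intro exI[of _ "g (x + t *\<^sub>R h) \<bullet> h - g x \<bullet> h - L * t * (norm h)\<^sup>2"]) auto
  qed simp
  then show ?thesis unfolding \<phi>_def h_def by simp
qed
lemma local_bound:
  fixes g :: "'a::real_inner \<Rightarrow> 'a" and u :: "nat \<Rightarrow> 'a"
  assumes u0: "u 0 = x" and uS: "\<And>t. u (Suc t) = u t - (\<eta> * w t) *\<^sub>R g (u t)"
    and lip: "\<And>y z. norm (g y - g z) \<le> L * norm (y - z)"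
    and L0: "0 \<le> L" and eta: "0 < \<eta>" and w1: "\<And>t. 1 \<le> w t" and wm: "\<And>t. t < \<tau> \<Longrightarrow> w t \<le> wm"
    and tau1: "1 \<le> \<tau>"
    and c: "L * \<eta> * wm * real \<tau> \<le> 1/16"
  shows "G \<bullet> (u \<tau> - x) + L / 2 * (norm (u \<tau> - x))\<^sup>2
    \<le> \<eta> * (\<Sum>t<\<tau>. w t) * (- (G \<bullet> g x) + 4 * (L * \<eta> * wm * real \<tau>) * (norm G)\<^sup>2
          + (L * \<eta> * wm * real \<tau>) * (norm (g x))\<^sup>2)"
proof -
  define c where "c = L * \<eta> * wm * real \<tau>"
  define a where "a = norm (g x)"
  define W where "W = (\<Sum>t<\<tau>. w t)"
  have a0: "0 \<le> a" unfolding a_def by simp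
  have wm1: "1 \<le> wm" using w1[of 0] wm[of 0] tau1 by linarith
  have Lew: "0 \<le> L * \<eta> * wm" using L0 eta wm1 by simp
  have c0: "0 \<le> c" unfolding c_def using Lew by simp
  have c1: "c \<le> 1/16" unfolding c_def using c .
  have ct: "L * \<eta> * wm * real t \<le> c" if "t \<le> \<tau>" for t
    unfolding c_def using that Lew by (intro mult_left_mono) auto
  have bnd: "norm (u t - x) \<le> 2 * \<eta> * wm * real t * a" if "t \<le> \<tau>" for t
    using that
  proof (induction t)
    case 0 then show ?case by (simp add: u0)
  next
    case (Suc t)
    then have tlt: "t < \<tau>" and IH: "norm (u t - x) \<le> 2 * \<eta> * wm * real t * a" by auto
    have g1: "norm (g (u t)) \<le> a + L * norm (u t - x)"
      using lip[of "u t" x] norm_triangle_ineq2[of "g (u t)" "g x"] unfolding a_def by linarith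
    have "L * norm (u t - x) \<le> L * (2 * \<eta> * wm * real t * a)"
      using IH L0 by (rule mult_left_mono)
    also have "\<dots> = 2 * a * (L * \<eta> * wm * real t)" by simp
    also have "\<dots> \<le> 2 * a * (1/16)"
      using ct[of t] tlt c1 a0 by (intro mult_left_mono) auto
    finally have g2: "norm (g (u t)) \<le> 2 * a" using g1 a0 by linarith
    have wt: "0 \<le> w t" "w t \<le> wm" using w1[of t] wm[OF tlt] by auto
    have "norm (u (Suc t) - x) = norm ((u t - x) - (\<eta> * w t) *\<^sub>R g (u t))"
      by (simp add: uS algebra_simps)
    also have "\<dots> \<le> norm (u t - x) + \<eta> * w t * norm (g (u t))"
      using norm_triangle_ineq4[of "u t - x" "(\<eta> * w t) *\<^sub>R g (u t)"] eta wt by simp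
    also have "\<eta> * w t * norm (g (u t)) \<le> \<eta> * wm * (2 * a)"
      using eta wt g2 by (intro mult_mono mult_left_mono) auto
    finally show ?case using IH by (simp add: algebra_simps)
  qed
  have gdiff: "norm (g (u t) - g x) \<le> 2 * c * a" if "t < \<tau>" for t
  proof -
    have "norm (g (u t) - g x) \<le> L * (2 * \<eta> * wm * real t * a)"
      using lip[of "u t" x] bnd[of t] that L0 mult_left_mono[of _ _ L] by (meson less_imp_le order_trans)
    also have "\<dots> = 2 * a * (L * \<eta> * wm * real t)" by simp
    also have "\<dots> \<le> 2 * a * c" using ct[of t] that a0 by (intro mult_left_mono) auto
    finally show ?thesis by (simp add: ac_simps)
  qed
  have ueq: "u t - x = - \<eta> *\<^sub>R (\<Sum>s<t. w s *\<^sub>R g (u s))" for t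
    by (induction t) (simp_all add: u0 uS algebra_simps scaleR_sum_right)
  define e where "e = (\<Sum>t<\<tau>. w t *\<^sub>R (g (u t) - g x))"
  have sumeq: "(\<Sum>t<\<tau>. w t *\<^sub>R g (u t)) = W *\<^sub>R g x + e"
    unfolding e_def W_def by (simp add: scaleR_diff_right sum_subtractf scaleR_sum_left)
  have W0: "0 \<le> W" unfolding W_def using w1 by (intro sum_nonneg) (auto intro: order_trans[OF zero_le_one])
  have Wle: "W \<le> real \<tau> * wm" unfolding W_def using sum_bounded_above[of "{..<\<tau>}" w wm] wm by auto
  have ne: "norm e \<le> 2 * c * a * W"
  proof -
    have "norm e \<le> (\<Sum>t<\<tau>. norm (w t *\<^sub>R (g (u t) - g x)))" unfolding e_def by (rule norm_sum)
    also have "\<dots> \<le> (\<Sum>t<\<tau>. w t * (2 * c * a))"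
    proof (intro sum_mono)
      fix t assume "t \<in> {..<\<tau>}"
      then have "norm (g (u t) - g x) \<le> 2 * c * a" using gdiff by auto
      moreover have "0 \<le> w t" using w1[of t] by linarith
      ultimately show "norm (w t *\<^sub>R (g (u t) - g x)) \<le> w t * (2 * c * a)"
        by (simp add: mult_left_mono)
    qed
    finally show ?thesis unfolding W_def by (simp add: sum_distrib_right mult.commute)
  qed
  have uv: "u \<tau> - x = - \<eta> *\<^sub>R (W *\<^sub>R g x + e)" using ueq[of \<tau>] sumeq by simp
  have I1: "G \<bullet> (u \<tau> - x) \<le> - \<eta> * W * (G \<bullet> g x) + \<eta> * (norm G * (2 * c * a * W))"
  proof -
    have "G \<bullet> (u \<tau> - x) = - \<eta> * W * (G \<bullet> g x) - \<eta> * (G \<bullet> e)"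
      by (simp add: uv inner_add_right algebra_simps)
    moreover have "- (G \<bullet> e) \<le> norm G * (2 * c * a * W)"
    proof -
      have "- (G \<bullet> e) \<le> norm G * norm e"
        using norm_cauchy_schwarz[of G "-e"] by simp
      also have "\<dots> \<le> norm G * (2 * c * a * W)" using ne by (intro mult_left_mono) auto
      finally show ?thesis .
    qed
    then have "\<eta> * (- (G \<bullet> e)) \<le> \<eta> * (norm G * (2 * c * a * W))"
      using eta by (intro mult_left_mono) auto
    ultimately show ?thesis by linarith
  qed
  have nuv: "norm (u \<tau> - x) \<le> \<eta> * W * (1 + 2 * c) * a"
  proof -
    have "norm (u \<tau> - x) = \<eta> * norm (W *\<^sub>R g x + e)" using uv eta by simp
    also have "\<dots> \<le> \<eta> * (W * a + 2 * c * a * W)"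
      using norm_triangle_ineq[of "W *\<^sub>R g x" e] ne W0 eta unfolding a_def
      by (intro mult_left_mono) auto
    finally show ?thesis by (simp add: algebra_simps)
  qed
  have LW: "L * \<eta> * W \<le> c"
  proof -
    have "L * \<eta> * W \<le> L * \<eta> * (real \<tau> * wm)" using Wle L0 eta by (intro mult_left_mono) auto
    then show ?thesis unfolding c_def by (simp add: algebra_simps)
  qed
  have I2: "L / 2 * (norm (u \<tau> - x))\<^sup>2 \<le> \<eta> * W * (c / 2 * (81/64) * a\<^sup>2)"
  proof -
    have "(norm (u \<tau> - x))\<^sup>2 \<le> (\<eta> * W * (1 + 2 * c) * a)\<^sup>2"
      using nuv by (intro power_mono) auto
    then have "L / 2 * (norm (u \<tau> - x))\<^sup>2 \<le> L / 2 * (\<eta> * W * (1 + 2 * c) * a)\<^sup>2"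
      using L0 by (intro mult_left_mono) auto
    also have "\<dots> = (\<eta> * W) * ((L * \<eta> * W) / 2 * (1 + 2 * c)\<^sup>2 * a\<^sup>2)"
      by (simp add: power2_eq_square algebra_simps)
    also have "\<dots> \<le> (\<eta> * W) * (c / 2 * (81/64) * a\<^sup>2)"
    proof (intro mult_left_mono)
      have "(1 + 2 * c)\<^sup>2 \<le> (9/8)\<^sup>2" using c0 c1 by (intro power_mono) auto
      then have "(1 + 2 * c)\<^sup>2 \<le> 81/64" by (simp add: power2_eq_square)
      moreover have "L * \<eta> * W / 2 \<le> c / 2" using LW by simp
      moreover have "0 \<le> L * \<eta> * W / 2" using L0 eta W0 by simp
      ultimately have "(L * \<eta> * W) / 2 * (1 + 2 * c)\<^sup>2 \<le> c / 2 * (81/64)"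
        by (intro mult_mono) auto
      then show "(L * \<eta> * W) / 2 * (1 + 2 * c)\<^sup>2 * a\<^sup>2 \<le> c / 2 * (81/64) * a\<^sup>2"
        by (intro mult_right_mono) auto
    qed (use eta W0 in simp)
    finally show ?thesis .
  qed
  have young: "norm G * (2 * c * a) \<le> 4 * c * (norm G)\<^sup>2 + c / 4 * a\<^sup>2"
  proof -
    have "0 \<le> c * (2 * norm G - a / 2)\<^sup>2" using c0 by simp
    then show ?thesis by (simp add: power2_eq_square algebra_simps)
  qed
  have "G \<bullet> (u \<tau> - x) + L / 2 * (norm (u \<tau> - x))\<^sup>2
      \<le> - \<eta> * W * (G \<bullet> g x) + \<eta> * W * (norm G * (2 * c * a)) + \<eta> * W * (c / 2 * (81/64) * a\<^sup>2)"
    using I1 I2 by (simp add: algebra_simps)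
  also have "\<dots> \<le> - \<eta> * W * (G \<bullet> g x) + \<eta> * W * (4 * c * (norm G)\<^sup>2 + c / 4 * a\<^sup>2)
      + \<eta> * W * (c / 2 * (81/64) * a\<^sup>2)"
    using young eta W0 by (simp add: mult_left_mono)
  also have "\<dots> = \<eta> * W * (- (G \<bullet> g x) + 4 * c * (norm G)\<^sup>2 + (113/128) * c * a\<^sup>2)"
    by (simp add: algebra_simps)
  also have "\<dots> \<le> \<eta> * W * (- (G \<bullet> g x) + 4 * c * (norm G)\<^sup>2 + c * a\<^sup>2)"
    using eta W0 c0 by (intro mult_left_mono) auto
  finally show ?thesis unfolding c_def W_def a_def .
qed

lemma exp_fin:
  fixes f :: "'a \<Rightarrow> real"
  assumes "finite (set_pmf M)"
  shows "measure_pmf.expectation M f = (\<Sum>a\<in>set_pmf M. pmf M a * f a)"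
  using integral_measure_pmf_real[OF assms, of M f] by (simp add: mult.commute)

lemma exp_pair:
  fixes f :: "'a \<times> 'b \<Rightarrow> real"
  assumes "finite (set_pmf M)" "finite (set_pmf N)"
  shows "measure_pmf.expectation (pair_pmf M N) f
       = measure_pmf.expectation M (\<lambda>a. measure_pmf.expectation N (\<lambda>b. f (a, b)))"
proof -
  have fin: "finite (set_pmf (pair_pmf M N))" using assms by simp
  have "measure_pmf.expectation (pair_pmf M N) f = (\<Sum>p\<in>set_pmf M \<times> set_pmf N. pmf (pair_pmf M N) p * f p)"
    using exp_fin[OF fin] by simp
  also have "\<dots> = (\<Sum>a\<in>set_pmf M. \<Sum>b\<in>set_pmf N. pmf M a * (pmf N b * f (a, b)))"
    by (subst sum.cartesian_product) (auto simp: pmf_pair mult.assoc intro!: sum.cong)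
  also have "\<dots> = measure_pmf.expectation M (\<lambda>a. measure_pmf.expectation N (\<lambda>b. f (a, b)))"
    using assms by (simp add: exp_fin sum_distrib_left)
  finally show ?thesis .
qed

lemma exp_swap:
  fixes f :: "'a \<Rightarrow> 'b \<Rightarrow> real"
  assumes "finite (set_pmf M)" "finite (set_pmf N)"
  shows "measure_pmf.expectation M (\<lambda>a. measure_pmf.expectation N (\<lambda>b. f a b))
       = measure_pmf.expectation N (\<lambda>b. measure_pmf.expectation M (\<lambda>a. f a b))"
  using assms by (simp add: exp_fin sum_distrib_left mult.left_commute sum.swap[of _ "set_pmf M"])

lemma tower:
  fixes h :: "'z \<Rightarrow> 'b \<Rightarrow> real" and \<phi> :: "(nat \<Rightarrow> 'b) \<Rightarrow> 'z"
  assumes A: "finite A" "r \<in> A" and fin: "\<And>j. finite (set_pmf (D j))"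
    and dep: "\<And>bs y. \<phi> (bs(r := y)) = \<phi> bs"
  shows "measure_pmf.expectation (Pi_pmf A dflt D) (\<lambda>bs. h (\<phi> bs) (bs r))
       = measure_pmf.expectation (Pi_pmf A dflt D) (\<lambda>bs. measure_pmf.expectation (D r) (\<lambda>B. h (\<phi> bs) B))"
proof -
  define A' where "A' = A - {r}"
  have AA: "A = insert r A'" "finite A'" "r \<notin> A'" using A unfolding A'_def by auto
  have finP: "finite (set_pmf (Pi_pmf A' dflt D))"
    using AA(2) fin by (simp add: set_Pi_pmf finite_PiE_dflt)
  have P: "Pi_pmf A dflt D = map_pmf (\<lambda>(y,f). f(r:=y)) (pair_pmf (D r) (Pi_pmf A' dflt D))"
    using AA by (simp add: Pi_pmf_insert)
  have "measure_pmf.expectation (Pi_pmf A dflt D) (\<lambda>bs. h (\<phi> bs) (bs r))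
      = measure_pmf.expectation (D r) (\<lambda>y. measure_pmf.expectation (Pi_pmf A' dflt D) (\<lambda>f. h (\<phi> f) y))"
    by (simp add: P exp_pair[OF fin finP] dep)
  also have "\<dots> = measure_pmf.expectation (Pi_pmf A' dflt D) (\<lambda>f. measure_pmf.expectation (D r) (\<lambda>y. h (\<phi> f) y))"
    by (rule exp_swap[OF fin finP])
  also have "\<dots> = measure_pmf.expectation (Pi_pmf A dflt D) (\<lambda>bs. measure_pmf.expectation (D r) (\<lambda>B. h (\<phi> bs) B))"
    by (simp add: P exp_pair[OF fin finP] dep)
  finally show ?thesis .
qed
lemma iter_dep:
  "(\<forall>j<r. bs j = bs' j) \<Longrightarrow> flex_iter K Bk gl eta w tau x0 bs r = flex_iter K Bk gl eta w tau x0 bs' r"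
  by (induction r) auto

theorem theorem1:
  fixes K N R :: nat
    and Bk :: "nat \<Rightarrow> 'p::euclidean_space set"
    and l :: "nat \<Rightarrow> 'p \<Rightarrow> real"
    and gl :: "nat \<Rightarrow> 'p \<Rightarrow> 'p"
    and L Finf :: real
    and Lb \<sigma> :: "nat \<Rightarrow> real"
    and D :: "nat \<Rightarrow> nat set pmf"
    and tau :: "nat \<Rightarrow> nat \<Rightarrow> nat"
    and eta :: "nat \<Rightarrow> nat \<Rightarrow> real"
    and w :: "nat \<Rightarrow> nat \<Rightarrow> nat \<Rightarrow> real"
    and x0 :: 'p
  defines "F \<equiv> (\<lambda>x. (\<Sum>i=1..N. l i x) / real N)"
    and "gF \<equiv> (\<lambda>x. (1 / real N) *\<^sub>R (\<Sum>i=1..N. gl i x))"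
    and "wmax \<equiv> (\<lambda>k r. MAX t\<in>{..<tau k r}. w k r t)"
    and "W \<equiv> (\<lambda>k r. \<Sum>t<tau k r. w k r t)"
    and "S \<equiv> (\<Sum>r<R. \<Sum>k\<le>K. eta k r * (\<Sum>t<tau k r. w k r t))"
  assumes blocks_disj: "\<forall>k\<le>K. \<forall>j\<le>K. k \<noteq> j \<longrightarrow> Bk k \<inter> Bk j = {}"
    and blocks_cover: "(\<Union>k\<le>K. Bk k) = Basis"
    and grad: "\<forall>i\<in>{1..N}. \<forall>x. (l i has_derivative (\<lambda>h. gl i x \<bullet> h)) (at x)"
    and A1: "\<forall>i\<in>{1..N}. \<forall>x y. norm (gl i x - gl i y) \<le> L * norm (x - y)"
    and A1k: "\<forall>i\<in>{1..N}. \<forall>k\<le>K. \<forall>x y.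
                 norm (blk Bk k (gl i x) - blk Bk k (gl i y)) \<le> Lb k * norm (x - y)"
    and batches: "\<forall>r. set_pmf (D r) \<subseteq> {B. B \<subseteq> {1..N} \<and> B \<noteq> {}}"
    and A2: "\<forall>r. \<forall>k\<le>K. \<forall>x.
               measure_pmf.expectation (D r) (\<lambda>B. sgrad Bk gl k x B) = blk Bk k (gF x)"
    and A3: "\<forall>r. \<forall>k\<le>K. \<forall>x.
               measure_pmf.expectation (D r) (\<lambda>B. (norm (blk Bk k (gF x) - sgrad Bk gl k x B))\<^sup>2)
                 \<le> (\<sigma> k)\<^sup>2"
    and lower: "\<forall>x. Finf \<le> F x"
    and tau_pos: "\<forall>k r. 1 \<le> tau k r"
    and eta_pos: "\<forall>k r. 0 < eta k r"
    and w_ge: "\<forall>k r t. 1 \<le> w k r t"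
    and step: "\<forall>r. \<forall>k\<le>K. eta k r * (16 * real (tau k r) * max L (Lb k) * wmax k r) \<le> 1"
    and R_pos: "1 \<le> R"
  shows "(1 / S) * (\<Sum>r<R. \<Sum>k\<le>K. eta k r * W k r *
            measure_pmf.expectation (Pi_pmf {..<R} {} D)
              (\<lambda>bs. (norm (blk Bk k (gF (flex_iter K Bk gl eta w tau x0 bs r))))\<^sup>2))
         \<le> (4 / S) * (F x0 - Finf)
           + (4 * L / S) * (\<Sum>r<R. \<Sum>k\<le>K. (eta k r)\<^sup>2 * W k r * wmax k r * real (tau k r) * (\<sigma> k)\<^sup>2)"
proof -
  have subk: "\<And>k. k \<le> K \<Longrightarrow> Bk k \<subseteq> Basis" using blocks_cover by blast
  have finD: "\<And>j. finite (set_pmf (D j))"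
  proof -
    fix j
    have "set_pmf (D j) \<subseteq> Pow {1..N}" using batches by blast
    then show "finite (set_pmf (D j))" by (rule finite_subset) simp
  qed
  have intD: "\<And>j (f :: nat set \<Rightarrow> real). integrable (measure_pmf (D j)) f"
    using finD by (rule integrable_measure_pmf_finite)
  have intDv: "\<And>j (f :: nat set \<Rightarrow> 'p). integrable (measure_pmf (D j)) f"
    using finD by (rule integrable_measure_pmf_finite)
  have N1: "1 \<le> N"
  proof -
    obtain B where B: "B \<in> set_pmf (D 0)" using set_pmf_not_empty by fastforce
    then have "B \<subseteq> {1..N}" "B \<noteq> {}" using batches by auto
    then obtain i where "i \<in> {1..N}" by blast
    then show ?thesis by simp
  qed
  have L0: "0 \<le> L"
  proof -
    obtain b :: 'p where b: "b \<in> Basis" using nonempty_Basis by blast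
    have "0 \<le> norm (gl 1 b - gl 1 0)" by simp
    also have "\<dots> \<le> L * norm (b - 0)"
    proof -
      have "(1::nat) \<in> {1..N}" using N1 by simp
      then show ?thesis using A1 by blast
    qed
    finally show ?thesis using b by simp
  qed
  have Fder: "\<And>x. (F has_derivative (\<lambda>h. gF x \<bullet> h)) (at x)"
  proof -
    fix x
    have "((\<lambda>x. (\<Sum>i=1..N. l i x) / real N) has_derivative (\<lambda>h. (\<Sum>i=1..N. gl i x \<bullet> h) / real N)) (at x)"
      using grad N1 by (auto intro!: derivative_eq_intros)
    then show "(F has_derivative (\<lambda>h. gF x \<bullet> h)) (at x)"
      unfolding F_def gF_def
      by (rule has_derivative_eq_rhs) (auto simp: inner_sum_left)
  qed
  have Flip: "\<And>x y. norm (gF x - gF y) \<le> L * norm (x - y)"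
  proof -
    fix x y :: 'p
    have "gF x - gF y = (1 / real N) *\<^sub>R (\<Sum>i=1..N. gl i x - gl i y)"
      unfolding gF_def by (simp add: sum_subtractf scaleR_diff_right)
    then have "norm (gF x - gF y) = (1 / real N) * norm (\<Sum>i=1..N. gl i x - gl i y)" by simp
    also have "\<dots> \<le> (1 / real N) * (\<Sum>i=1..N. L * norm (x - y))"
      using A1 by (intro mult_left_mono order_trans[OF norm_sum sum_mono]) auto
    also have "\<dots> = L * norm (x - y)" using N1 by simp
    finally show "norm (gF x - gF y) \<le> L * norm (x - y)" .
  qed
  have desc: "\<And>x y. F y \<le> F x + gF x \<bullet> (y - x) + L / 2 * (norm (y - x))\<^sup>2"
    by (rule descent[OF Fder Flip])
  have sglip: "\<And>k B y z. k \<le> K \<Longrightarrow> B \<in> set_pmf (D r) \<Longrightarrow>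
      norm (sgrad Bk gl k y B - sgrad Bk gl k z B) \<le> L * norm (y - z)" for r
  proof -
    fix k B y z assume k: "k \<le> K" and B: "B \<in> set_pmf (D r)"
    then have BN: "B \<subseteq> {1..N}" "B \<noteq> {}" using batches by auto
    then have finB: "finite B" using finite_subset by blast
    then have cB: "0 < card B" using BN by (simp add: card_gt_0_iff)
    have "sgrad Bk gl k y B - sgrad Bk gl k z B = (1 / real (card B)) *\<^sub>R (\<Sum>i\<in>B. blk Bk k (gl i y - gl i z))"
      unfolding sgrad_def by (simp add: sum_subtractf scaleR_diff_right blk_diff)
    then have "norm (sgrad Bk gl k y B - sgrad Bk gl k z B) = (1 / real (card B)) * norm (\<Sum>i\<in>B. blk Bk k (gl i y - gl i z))"
      by simp
    also have "\<dots> \<le> (1 / real (card B)) * (\<Sum>i\<in>B. L * norm (y - z))"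
    proof (intro mult_left_mono order_trans[OF norm_sum sum_mono])
      fix i assume "i \<in> B"
      then have "i \<in> {1..N}" using BN by auto
      then show "norm (blk Bk k (gl i y - gl i z)) \<le> L * norm (y - z)"
        using norm_blk_le[of Bk k, OF subk[OF k]] A1 order_trans by blast
    qed simp
    also have "\<dots> = L * norm (y - z)" using cB by simp
    finally show "norm (sgrad Bk gl k y B - sgrad Bk gl k z B) \<le> L * norm (y - z)" .
  qed
  have wmax_ge: "\<And>k r t. t < tau k r \<Longrightarrow> w k r t \<le> wmax k r"
    unfolding wmax_def by (intro Max_ge) auto
  have wmax1: "\<And>k r. 1 \<le> wmax k r"
    using wmax_ge[of 0] tau_pos w_ge order_trans by (metis less_le_trans zero_less_one)
  have cbound: "\<And>k r. k \<le> K \<Longrightarrow> L * eta k r * wmax k r * real (tau k r) \<le> 1/16"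
  proof -
    fix k r assume k: "k \<le> K"
    have nn: "0 \<le> eta k r * real (tau k r) * wmax k r"
      using eta_pos wmax1[of k r] by (simp add: less_imp_le)
    have "L * eta k r * wmax k r * real (tau k r) = (eta k r * real (tau k r) * wmax k r) * L" by simp
    also have "\<dots> \<le> (eta k r * real (tau k r) * wmax k r) * max L (Lb k)"
      using nn by (intro mult_left_mono) auto
    also have "\<dots> = eta k r * (16 * real (tau k r) * max L (Lb k) * wmax k r) / 16" by simp
    also have "\<dots> \<le> 1/16"
    proof -
      have "eta k r * (16 * real (tau k r) * max L (Lb k) * wmax k r) \<le> 1" using step k by blast
      then show ?thesis by simp
    qed
    finally show "L * eta k r * wmax k r * real (tau k r) \<le> 1/16" .
  qed
  have round: "\<And>x r. measure_pmf.expectation (D r) (\<lambda>B. F (flex_round K Bk gl eta w tau r B x))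
      \<le> F x - 1/4 * (\<Sum>k\<le>K. eta k r * W k r * (norm (blk Bk k (gF x)))\<^sup>2)
         + L * (\<Sum>k\<le>K. (eta k r)\<^sup>2 * W k r * wmax k r * real (tau k r) * (\<sigma> k)\<^sup>2)"
  proof -
    fix x r
    define u where "u k B = local_iter Bk gl (eta k r) (w k r) k B x (tau k r)" for k B
    define G where "G k = blk Bk k (gF x)" for k
    define c where "c k = L * eta k r * wmax k r * real (tau k r)" for k
    define sg where "sg k B = sgrad Bk gl k x B" for k B
    define Q where "Q k B = eta k r * W k r * (- (G k \<bullet> sg k B) + 4 * c k * (norm (G k))\<^sup>2
        + c k * (norm (sg k B))\<^sup>2)" for k B
    have pt: "F (flex_round K Bk gl eta w tau r B x) \<le> F x + (\<Sum>k\<le>K. Q k B)"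
      if B: "B \<in> set_pmf (D r)" for B
    proof -
      define x' where "x' = flex_round K Bk gl eta w tau r B x"
      have x'eq: "x' = (\<Sum>k\<le>K. blk Bk k (u k B))" unfolding x'_def flex_round_def u_def by simp
      have dx: "x' - x = (\<Sum>k\<le>K. blk Bk k (u k B - x))"
        using blk_decomp[OF blocks_disj blocks_cover, of x]
        by (simp add: x'eq blk_diff sum_subtractf)
      have bdx: "blk Bk k (x' - x) = blk Bk k (u k B - x)" if "k \<le> K" for k
        unfolding dx by (rule blk_sum_blk[OF blocks_disj blocks_cover that])
      have inner1: "gF x \<bullet> (x' - x) = (\<Sum>k\<le>K. G k \<bullet> (u k B - x))"
      proof -
        have "gF x \<bullet> (x' - x) = (\<Sum>k\<le>K. blk Bk k (gF x) \<bullet> (x' - x))"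
          by (rule blk_decomp_inner[OF blocks_disj blocks_cover])
        also have "\<dots> = (\<Sum>k\<le>K. G k \<bullet> (u k B - x))"
        proof (rule sum.cong[OF refl])
          fix k assume "k \<in> {..K}"
          then have k: "k \<le> K" by simp
          have "blk Bk k (gF x) \<bullet> (x' - x) = blk Bk k (gF x) \<bullet> blk Bk k (x' - x)"
            using blk_inner_blk[of Bk k, OF subk[OF k]] by simp
          also have "\<dots> = blk Bk k (gF x) \<bullet> blk Bk k (u k B - x)" using bdx[OF k] by simp
          also have "\<dots> = G k \<bullet> (u k B - x)"
            unfolding G_def using blk_inner_blk[of Bk k, OF subk[OF k]] by simp
          finally show "blk Bk k (gF x) \<bullet> (x' - x) = G k \<bullet> (u k B - x)" .
        qed
        finally show ?thesis .
      qed
      have norm1: "(norm (x' - x))\<^sup>2 \<le> (\<Sum>k\<le>K. (norm (u k B - x))\<^sup>2)"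
      proof -
        have "(norm (x' - x))\<^sup>2 = (x' - x) \<bullet> (x' - x)" by (simp add: power2_norm_eq_inner)
        also have "\<dots> = (\<Sum>k\<le>K. blk Bk k (x' - x) \<bullet> (x' - x))"
          by (rule blk_decomp_inner[OF blocks_disj blocks_cover])
        also have "\<dots> = (\<Sum>k\<le>K. (norm (blk Bk k (u k B - x)))\<^sup>2)"
        proof (rule sum.cong[OF refl])
          fix k assume "k \<in> {..K}"
          then have k: "k \<le> K" by simp
          show "blk Bk k (x' - x) \<bullet> (x' - x) = (norm (blk Bk k (u k B - x)))\<^sup>2"
            using blk_inner_blk[of Bk k, OF subk[OF k], of "x' - x" "x' - x"] bdx[OF k]
            by (simp add: power2_norm_eq_inner)
        qed
        also have "\<dots> \<le> (\<Sum>k\<le>K. (norm (u k B - x))\<^sup>2)"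
          using subk by (intro sum_mono power_mono norm_blk_le) auto
        finally show ?thesis .
      qed
      have loc: "G k \<bullet> (u k B - x) + L / 2 * (norm (u k B - x))\<^sup>2 \<le> Q k B" if k: "k \<le> K" for k
        unfolding Q_def W_def c_def sg_def u_def
      proof (rule local_bound[where g = "\<lambda>y. sgrad Bk gl k y B" and L = L])
        show "\<And>y z. norm (sgrad Bk gl k y B - sgrad Bk gl k z B) \<le> L * norm (y - z)"
          using sglip[OF k B] .
      qed (use L0 eta_pos w_ge wmax_ge tau_pos cbound[OF k] in auto)
      have "F x' \<le> F x + gF x \<bullet> (x' - x) + L / 2 * (norm (x' - x))\<^sup>2" by (rule desc)
      also have "\<dots> \<le> F x + (\<Sum>k\<le>K. G k \<bullet> (u k B - x)) + L / 2 * (\<Sum>k\<le>K. (norm (u k B - x))\<^sup>2)"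
        using norm1 L0 inner1 by (simp add: mult_left_mono)
      also have "\<dots> = F x + (\<Sum>k\<le>K. G k \<bullet> (u k B - x) + L / 2 * (norm (u k B - x))\<^sup>2)"
        by (simp add: sum.distrib sum_distrib_left)
      also have "\<dots> \<le> F x + (\<Sum>k\<le>K. Q k B)"
        using loc by (intro add_left_mono sum_mono) auto
      finally show ?thesis unfolding x'_def .
    qed
    have EQ: "measure_pmf.expectation (D r) (Q k)
        \<le> - 1/4 * (eta k r * W k r * (norm (G k))\<^sup>2)
           + L * ((eta k r)\<^sup>2 * W k r * wmax k r * real (tau k r) * (\<sigma> k)\<^sup>2)" if k: "k \<le> K" for k
    proof -
      have Es: "measure_pmf.expectation (D r) (sg k) = G k"
        using A2 k unfolding sg_def G_def by auto
      have E1: "measure_pmf.expectation (D r) (\<lambda>B. G k \<bullet> sg k B) = (norm (G k))\<^sup>2"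
        using Es intDv by (simp add: power2_norm_eq_inner)
      have idn: "(norm (sg k B))\<^sup>2 = (norm (G k - sg k B))\<^sup>2 - (norm (G k))\<^sup>2 + 2 * (G k \<bullet> sg k B)" for B
        by (simp add: power2_norm_eq_inner inner_diff_left inner_diff_right inner_commute)
      have E3: "measure_pmf.expectation (D r) (\<lambda>B. (norm (G k - sg k B))\<^sup>2) \<le> (\<sigma> k)\<^sup>2"
        using A3 k unfolding sg_def G_def by auto
      have E2: "measure_pmf.expectation (D r) (\<lambda>B. (norm (sg k B))\<^sup>2) \<le> (\<sigma> k)\<^sup>2 + (norm (G k))\<^sup>2"
        using E1 E3 intD by (simp add: idn)
      have W0: "0 \<le> eta k r * W k r"
        unfolding W_def using eta_pos w_ge by (intro mult_nonneg_nonneg sum_nonneg) (auto intro: less_imp_le order_trans[OF zero_le_one])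
      have c0: "0 \<le> c k" unfolding c_def
        using L0 eta_pos[rule_format, of k r] wmax1[of k r]
        by (intro mult_nonneg_nonneg) auto
      have c1: "c k \<le> 1/16" unfolding c_def using cbound[OF k] .
      have "measure_pmf.expectation (D r) (Q k) = eta k r * W k r * (- (norm (G k))\<^sup>2 + 4 * c k * (norm (G k))\<^sup>2
          + c k * measure_pmf.expectation (D r) (\<lambda>B. (norm (sg k B))\<^sup>2))"
        unfolding Q_def using E1 intD by simp
      also have "\<dots> \<le> eta k r * W k r * (- (norm (G k))\<^sup>2 + 4 * c k * (norm (G k))\<^sup>2
          + c k * ((\<sigma> k)\<^sup>2 + (norm (G k))\<^sup>2))"
        using E2 c0 W0 by (intro mult_left_mono add_left_mono) auto
      also have "\<dots> = eta k r * W k r * ((5 * c k - 1) * (norm (G k))\<^sup>2) + eta k r * W k r * c k * (\<sigma> k)\<^sup>2"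
        by (simp add: algebra_simps)
      also have "\<dots> \<le> eta k r * W k r * (- 1/4 * (norm (G k))\<^sup>2) + eta k r * W k r * c k * (\<sigma> k)\<^sup>2"
        using c1 W0 by (intro add_right_mono mult_left_mono mult_right_mono) auto
      also have "\<dots> = - 1/4 * (eta k r * W k r * (norm (G k))\<^sup>2)
           + L * ((eta k r)\<^sup>2 * W k r * wmax k r * real (tau k r) * (\<sigma> k)\<^sup>2)"
        unfolding c_def by (simp add: power2_eq_square algebra_simps)
      finally show ?thesis .
    qed
    have "measure_pmf.expectation (D r) (\<lambda>B. F (flex_round K Bk gl eta w tau r B x))
        \<le> measure_pmf.expectation (D r) (\<lambda>B. F x + (\<Sum>k\<le>K. Q k B))"
      by (intro integral_mono_AE intD AE_pmfI pt)
    also have "\<dots> = F x + (\<Sum>k\<le>K. measure_pmf.expectation (D r) (Q k))"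
      using intD by simp
    also have "\<dots> \<le> F x + (\<Sum>k\<le>K. - 1/4 * (eta k r * W k r * (norm (G k))\<^sup>2)
           + L * ((eta k r)\<^sup>2 * W k r * wmax k r * real (tau k r) * (\<sigma> k)\<^sup>2))"
      using EQ by (intro add_left_mono sum_mono) auto
    also have "\<dots> = F x - 1/4 * (\<Sum>k\<le>K. eta k r * W k r * (norm (blk Bk k (gF x)))\<^sup>2)
         + L * (\<Sum>k\<le>K. (eta k r)\<^sup>2 * W k r * wmax k r * real (tau k r) * (\<sigma> k)\<^sup>2)"
      unfolding G_def by (simp add: sum.distrib sum_distrib_left sum_subtractf sum_divide_distrib)
    finally show "measure_pmf.expectation (D r) (\<lambda>B. F (flex_round K Bk gl eta w tau r B x))
      \<le> F x - 1/4 * (\<Sum>k\<le>K. eta k r * W k r * (norm (blk Bk k (gF x)))\<^sup>2)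
         + L * (\<Sum>k\<le>K. (eta k r)\<^sup>2 * W k r * wmax k r * real (tau k r) * (\<sigma> k)\<^sup>2)" .
  qed
  define P where "P = Pi_pmf {..<R} {} D"
  define it where "it r bs = flex_iter K Bk gl eta w tau x0 bs r" for r bs
  define Nr where "Nr r = (\<Sum>k\<le>K. (eta k r)\<^sup>2 * W k r * wmax k r * real (tau k r) * (\<sigma> k)\<^sup>2)" for r
  define a where "a k r bs = (norm (blk Bk k (gF (it r bs))))\<^sup>2" for k r bs
  define Phi where "Phi r = measure_pmf.expectation P (\<lambda>bs. F (it r bs))" for r
  have finP: "finite (set_pmf P)" unfolding P_def using finD by (simp add: set_Pi_pmf finite_PiE_dflt)
  have intP: "\<And>(f :: (nat \<Rightarrow> nat set) \<Rightarrow> real). integrable (measure_pmf P) f"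
    using finP by (rule integrable_measure_pmf_finite)
  have stepR: "Phi (Suc r) \<le> Phi r - 1/4 * (\<Sum>k\<le>K. eta k r * W k r * measure_pmf.expectation P (a k r)) + L * Nr r"
    if r: "r < R" for r
  proof -
    have "Phi (Suc r) = measure_pmf.expectation P (\<lambda>bs. F (flex_round K Bk gl eta w tau r (bs r) (it r bs)))"
      unfolding Phi_def it_def by simp
    also have "\<dots> = measure_pmf.expectation P (\<lambda>bs. measure_pmf.expectation (D r)
                   (\<lambda>B. F (flex_round K Bk gl eta w tau r B (it r bs))))"
      unfolding P_def
    proof (rule tower[where h = "\<lambda>z B. F (flex_round K Bk gl eta w tau r B z)" and \<phi> = "it r"])
      show "\<And>bs y. it r (bs(r := y)) = it r bs" unfolding it_def by (rule iter_dep) auto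
    qed (use r finD in auto)
    also have "\<dots> \<le> measure_pmf.expectation P (\<lambda>bs. F (it r bs)
         - 1/4 * (\<Sum>k\<le>K. eta k r * W k r * a k r bs) + L * Nr r)"
      unfolding a_def Nr_def by (intro integral_mono intP round)
    also have "\<dots> = Phi r - 1/4 * (\<Sum>k\<le>K. eta k r * W k r * measure_pmf.expectation P (a k r)) + L * Nr r"
      unfolding Phi_def using intP by simp
    finally show ?thesis .
  qed
  have tele: "1/4 * (\<Sum>r<n. \<Sum>k\<le>K. eta k r * W k r * measure_pmf.expectation P (a k r))
      \<le> Phi 0 - Phi n + L * (\<Sum>r<n. Nr r)" if "n \<le> R" for n
    using that
  proof (induction n)
    case 0 then show ?case by simp
  next
    case (Suc n)
    then have "n < R" by simp
    from stepR[OF this] Suc show ?case by (simp add: algebra_simps)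
  qed
  have Phi0: "Phi 0 = F x0" unfolding Phi_def it_def by simp
  have PhiR: "Finf \<le> Phi R"
  proof -
    have "measure_pmf.expectation P (\<lambda>_. Finf) \<le> Phi R"
      unfolding Phi_def using lower by (intro integral_mono intP) auto
    then show ?thesis by simp
  qed
  define T where "T = (\<Sum>r<R. \<Sum>k\<le>K. eta k r * W k r * measure_pmf.expectation P (a k r))"
  have T: "T \<le> 4 * (F x0 - Finf + L * (\<Sum>r<R. Nr r))"
    using tele[of R] Phi0 PhiR unfolding T_def by simp
  have Spos: "0 < S"
    unfolding S_def
  proof (intro sum_pos)
    fix r k
    have "0 < (\<Sum>t<tau k r. w k r t)"
    proof (intro sum_pos)
      have "(0::nat) \<in> {..<tau k r}" using tau_pos[rule_format, of k r] by simp
      then show "{..<tau k r} \<noteq> {}" by blast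
    qed (use w_ge in \<open>auto intro: less_le_trans[OF zero_less_one]\<close>)
    then show "0 < eta k r * (\<Sum>t<tau k r. w k r t)" using eta_pos by simp
  next
    have "(0::nat) \<in> {..<R}" using R_pos by simp
    then show "{..<R} \<noteq> {}" by blast
  qed auto
  have "(1 / S) * T \<le> (1 / S) * (4 * (F x0 - Finf + L * (\<Sum>r<R. Nr r)))"
    using T Spos by (intro mult_left_mono) auto
  also have "\<dots> = (4 / S) * (F x0 - Finf)
           + (4 * L / S) * (\<Sum>r<R. \<Sum>k\<le>K. (eta k r)\<^sup>2 * W k r * wmax k r * real (tau k r) * (\<sigma> k)\<^sup>2)"
    unfolding Nr_def by (simp add: algebra_simps diff_divide_distrib add_divide_distrib)
  finally show ?thesis unfolding T_def a_def P_def it_def .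
qed

end
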